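(* Let $R$ be a commutative ring with identity and $M$ a non-zero comultiplication $R$-module with $\mathrm{Min}(M)=\{S_i\}_{i\in I}$, where $|I|>1$ and the $S_i$ are pairwise distinct. If $\Lambda$ is a non-empty proper finite subset of $I$, then $\sum_{\lambda\in\Lambda}S_\lambda$ is a non-large submodule of $M$.
   Context: An $R$-module $M$ is a comultiplication module if for every submodule $N$ of $M$ there is an ideal $I$ of $R$ with $N=\mathrm{Ann}_M(I)=\{m\in M: Im=0\}$. A submodule $N$ of $M$ is large (essential) in $M$ if $N\cap L\neq 0$ for every non-zero submodule $L$ of $M$. $\mathrm{Min}(M)$ denotes the set of minimal (i.e. simple) submodules of $M$. *)

theory Defs
  imports Complex_Main
begin

text \<open>Modules: R is a type of class comm_ring_1, M a type of class ab_group_add,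
  with scalar multiplication scale satisfying the module axioms (locale module).\<close>

definition is_ideal :: "'a::comm_ring_1 set \<Rightarrow> bool" where
  "is_ideal I \<longleftrightarrow> 0 \<in> I \<and> (\<forall>x\<in>I. \<forall>y\<in>I. x + y \<in> I) \<and> (\<forall>r. \<forall>x\<in>I. r * x \<in> I)"

definition annM :: "('a::comm_ring_1 \<Rightarrow> 'b::ab_group_add \<Rightarrow> 'b) \<Rightarrow> 'a set \<Rightarrow> 'b set" where
  "annM scale I = {m. \<forall>a\<in>I. scale a m = 0}"

definition comultiplication_module :: "('a::comm_ring_1 \<Rightarrow> 'b::ab_group_add \<Rightarrow> 'b) \<Rightarrow> bool" where
  "comultiplication_module scale \<longleftrightarrow>
     (\<forall>N. module.subspace scale N \<longrightarrow> (\<exists>I. is_ideal I \<and> N = annM scale I))"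

definition large_submodule :: "('a::comm_ring_1 \<Rightarrow> 'b::ab_group_add \<Rightarrow> 'b) \<Rightarrow> 'b set \<Rightarrow> bool" where
  "large_submodule scale N \<longleftrightarrow> module.subspace scale N \<and>
     (\<forall>L. module.subspace scale L \<and> L \<noteq> {0} \<longrightarrow> N \<inter> L \<noteq> {0})"

definition minimal_submodules :: "('a::comm_ring_1 \<Rightarrow> 'b::ab_group_add \<Rightarrow> 'b) \<Rightarrow> 'b set set" where
  "minimal_submodules scale = {S. module.subspace scale S \<and> S \<noteq> {0} \<and>
     (\<forall>L. module.subspace scale L \<and> L \<subseteq> S \<longrightarrow> L = {0} \<or> L = S)}"

end

theory Submission
  imports Defs
begin

theorem lemma2p3:
  fixes scale :: "'a::comm_ring_1 \<Rightarrow> 'b::ab_group_add \<Rightarrow> 'b"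
    and I :: "'i set" and S :: "'i \<Rightarrow> 'b set" and \<Lambda> :: "'i set"
  assumes "module scale"
    and "comultiplication_module scale"
    and "(UNIV :: 'b set) \<noteq> {0}"
    and "minimal_submodules scale = S ` I"
    and "inj_on S I"
    and "\<exists>i\<in>I. \<exists>j\<in>I. i \<noteq> j"
    and "\<Lambda> \<subseteq> I" and "\<Lambda> \<noteq> {}" and "\<Lambda> \<noteq> I" and "finite \<Lambda>"
  shows "module.subspace scale (module.span scale (\<Union>l\<in>\<Lambda>. S l))
    \<and> \<not> large_submodule scale (module.span scale (\<Union>l\<in>\<Lambda>. S l))"
proof -
  interpret module scale by fact
  define ann where "ann N = {r. \<forall>m\<in>N. scale r m = 0}" for N
  have dc: "N = annM scale (ann N)" if "subspace N" for N
  proof -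
    have "\<exists>J. is_ideal J \<and> N = annM scale J"
      using assms(2) that unfolding comultiplication_module_def by (elim allE impE) 
    then obtain J where J: "is_ideal J" "N = annM scale J" by (elim exE conjE)
    have "J \<subseteq> ann N"
    proof
      fix r assume "r \<in> J"
      thus "r \<in> ann N" unfolding ann_def using J(2) unfolding annM_def by blast
    qed
    hence "annM scale (ann N) \<subseteq> annM scale J" unfolding annM_def by blast
    hence "annM scale (ann N) \<subseteq> N" using J(2) by simp
    moreover have "N \<subseteq> annM scale (ann N)" unfolding ann_def annM_def by blast
    ultimately show ?thesis by blast
  qed
  have minS: "subspace (S i) \<and> S i \<noteq> {0} \<and> (\<forall>L. subspace L \<and> L \<subseteq> S i \<longrightarrow> L = {0} \<or> L = S i)"
    if "i \<in> I" for i
    using assms(4) that unfolding minimal_submodules_def by blast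
  obtain j where j: "j \<in> I" "j \<notin> \<Lambda>" using assms(7,9) by blast
  note Sj = minS[OF j(1)]
  define U where "U = (\<Union>l\<in>\<Lambda>. S l)"
  have inter0: "span U \<inter> S j = {0}"
  proof (rule ccontr)
    assume ne: "span U \<inter> S j \<noteq> {0}"
    have "subspace (span U \<inter> S j)" using Sj subspace_inter by blast
    hence "span U \<inter> S j = S j" using Sj ne by blast
    hence sub: "S j \<subseteq> span U" by blast
    have intsub: "r \<in> ann (S j)" if r: "\<forall>l\<in>\<Lambda>. r \<in> ann (S l)" for r
    proof -
      have "subspace {m. scale r m = 0}"
      proof (rule subspaceI)
        fix c x assume "x \<in> {m. scale r m = 0}"
        hence "scale c (scale r x) = 0" by simp
        thus "scale c x \<in> {m. scale r m = 0}" by (simp add: mult.commute)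
      qed (auto simp: scale_right_distrib)
      moreover have "U \<subseteq> {m. scale r m = 0}" using r unfolding U_def ann_def by auto
      ultimately have "span U \<subseteq> {m. scale r m = 0}" using span_minimal by blast
      thus ?thesis using sub unfolding ann_def by auto
    qed
    have prime: "b \<in> ann (S j)" if ab: "a * b \<in> ann (S j)" and a: "a \<notin> ann (S j)" for a b
    proof -
      have "subspace (scale a ` S j)"
      proof (rule subspaceI)
        show "0 \<in> scale a ` S j" using Sj subspace_0 by force
        fix x y assume "x \<in> scale a ` S j" "y \<in> scale a ` S j"
        then obtain u v where "u \<in> S j" "v \<in> S j" "x = scale a u" "y = scale a v" by blast
        thus "x + y \<in> scale a ` S j"
          using Sj subspace_add[of "S j" u v] by (auto simp: scale_right_distrib[symmetric])
      next
        fix c x assume "x \<in> scale a ` S j"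
        then obtain u where "u \<in> S j" "x = scale a u" by blast
        hence "scale c x = scale a (scale c u)" using scale_left_commute[of c a u] by simp
        moreover have "scale c u \<in> S j" using Sj subspace_scale \<open>u \<in> S j\<close> by blast
        ultimately show "scale c x \<in> scale a ` S j" by blast
      qed
      moreover have "scale a ` S j \<subseteq> S j" using Sj subspace_scale by blast
      moreover have "scale a ` S j \<noteq> {0}" using a unfolding ann_def by auto
      ultimately have eq: "scale a ` S j = S j" using Sj by blast
      show ?thesis unfolding ann_def
      proof
        show "\<forall>m\<in>S j. scale b m = 0"
        proof
          fix m assume "m \<in> S j"
          then obtain u where u: "u \<in> S j" "m = scale a u" using eq by blast
          have "scale (a * b) u = 0" using ab u(1) unfolding ann_def by auto
          thus "scale b m = 0" using u by (simp add: mult.commute)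
        qed
      qed
    qed
    have one: "1 \<notin> ann (S j)" using Sj subspace_0[of "S j"] unfolding ann_def by auto
    have "\<exists>l\<in>\<Lambda>. ann (S l) \<subseteq> ann (S j)"
    proof (rule ccontr)
      assume "\<not> ?thesis"
      hence "\<forall>l\<in>\<Lambda>. \<exists>a. a \<in> ann (S l) \<and> a \<notin> ann (S j)" by blast
      then obtain f where f: "\<forall>l\<in>\<Lambda>. f l \<in> ann (S l) \<and> f l \<notin> ann (S j)"
        by (rule bchoice[elim_format]) blast
      have ideal: "r * x \<in> ann (S l)" if "x \<in> ann (S l)" for r x l
      proof -
        have "scale (r * x) m = 0" if "m \<in> S l" for m
        proof -
          have "scale (r * x) m = scale r (scale x m)" by simp
          moreover have "scale x m = 0" using \<open>x \<in> ann (S l)\<close> that unfolding ann_def by blast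
          ultimately show ?thesis by simp
        qed
        thus ?thesis unfolding ann_def by blast
      qed
      have "F \<subseteq> \<Lambda> \<Longrightarrow> prod f F \<notin> ann (S j)" for F
        using finite_subset[OF _ assms(10)]
      proof (induction F rule: infinite_finite_induct)
        case (infinite A) thus ?case using assms(10) finite_subset by blast
      next
        case empty thus ?case using one by simp
      next
        case (insert x F)
        thus ?case using prime f by auto
      qed
      hence "prod f \<Lambda> \<notin> ann (S j)" by blast
      moreover have "prod f \<Lambda> \<in> ann (S l)" if "l \<in> \<Lambda>" for l
      proof -
        have "prod f \<Lambda> = f l * prod f (\<Lambda> - {l})"
          using that assms(10) by (simp add: prod.remove)
        thus ?thesis using ideal[of "f l" l "prod f (\<Lambda> - {l})"] f that
          by (simp add: mult.commute)
      qed
      ultimately show False using intsub by blast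
    qed
    then obtain l where l: "l \<in> \<Lambda>" "ann (S l) \<subseteq> ann (S j)" by blast
    have lI: "l \<in> I" using l assms(7) by blast
    have anti: "annM scale (ann (S j)) \<subseteq> annM scale (ann (S l))"
      using l(2) unfolding annM_def by blast
    have "S j \<subseteq> S l"
    proof -
      have "S j = annM scale (ann (S j))" using dc Sj by blast
      also have "\<dots> \<subseteq> annM scale (ann (S l))" by (rule anti)
      also have "\<dots> = S l" using dc minS[OF lI] by metis
      finally show ?thesis .
    qed
    hence "S j = S l" using minS[OF lI] Sj by blast
    hence "j = l" using assms(5) j(1) lI by (meson inj_onD)
    thus False using j l by blast
  qed
  have "\<not> large_submodule scale (span U)"
    unfolding large_submodule_def using Sj inter0 by blast
  thus ?thesis unfolding U_def by simp
qed

end
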